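(* For any sequence of groups $(G_n)_{n\in\mathbb N}$, the archipelago group is a direct limit $$\mathcal A(G_n)=\varinjlim_k \circledast_{i\ge k}G_i,$$ where the bonding maps are the quotient maps $\circledast_{i\ge k}G_i\to(\circledast_{i\ge k}G_i)/\langle\langle G_k\rangle\rangle\cong\circledast_{i\ge k+1}G_i$ (i.e. the maps deleting all letters from $G_k$).
   Context: For a sequence of groups $(G_n)_{n\in\mathbb N}$, an infinite word is a map $w:L\to\bigsqcup_n (G_n\setminus\{1\})$ from a countable linearly ordered set $L$ such that $w^{-1}(G_n)$ is finite for every $n$. Two infinite words are equivalent if for every $m$ their restrictions to the letters from $G_1,\dots,G_m$ represent the same element of $G_1*\cdots*G_m$. The topologist's product $\circledast_n G_n$ is the group of equivalence classes, with multiplication induced by concatenation and inversion by reversing the order and inverting each letter; $\circledast_{i\ge k}G_i$ is the same construction for the subsequence $(G_i)_{i\ge k}$. The free product $*_n G_n$ is the subgroup of classes of finite words. The archipelago group is $\mathcal A(G_n):=\circledast_n G_n/\langle\langle *_n G_n\rangle\rangle$, $\langle\langle\cdot\rangle\rangle$ denoting normal closure. *)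

theory Defs
  imports "HOL-Algebra.Algebra"
begin

(* Letters: pairs (n, g) meaning the element g of G n.
   Infinite words: a subset L of the rationals (every countable linear order
   embeds into Q) together with a labelling w of L by letters. *)

type_synonym 'a letter = "nat \<times> 'a"
type_synonym 'a iword = "rat set \<times> (rat \<Rightarrow> 'a letter)"

definition is_word :: "(nat \<Rightarrow> 'a monoid) \<Rightarrow> 'a iword \<Rightarrow> bool" where
  "is_word G u \<longleftrightarrow>
     (\<forall>x\<in>fst u. snd (snd u x) \<in> carrier (G (fst (snd u x))) - {\<one>\<^bsub>G (fst (snd u x))\<^esub>}) \<and>
     (\<forall>n. finite {x\<in>fst u. fst (snd u x) = n})"

inductive fp_step :: "(nat \<Rightarrow> 'a monoid) \<Rightarrow> 'a letter list \<Rightarrow> 'a letter list \<Rightarrow> bool"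
  for G where
  merge: "a \<in> carrier (G n) \<Longrightarrow> b \<in> carrier (G n) \<Longrightarrow>
     fp_step G (xs @ (n, a) # (n, b) # ys) (xs @ (n, a \<otimes>\<^bsub>G n\<^esub> b) # ys)"
| delete: "fp_step G (xs @ (n, \<one>\<^bsub>G n\<^esub>) # ys) (xs @ ys)"

definition fp_eq :: "(nat \<Rightarrow> 'a monoid) \<Rightarrow> 'a letter list \<Rightarrow> 'a letter list \<Rightarrow> bool" where
  "fp_eq G = (symclp (fp_step G))\<^sup>*\<^sup>*"

definition restr :: "nat \<Rightarrow> 'a iword \<Rightarrow> 'a letter list" where
  "restr m u = map (snd u) (sorted_list_of_set {x\<in>fst u. fst (snd u x) \<le> m})"

definition word_equiv :: "(nat \<Rightarrow> 'a monoid) \<Rightarrow> 'a iword \<Rightarrow> 'a iword \<Rightarrow> bool" where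
  "word_equiv G u v \<longleftrightarrow> (\<forall>m. fp_eq G (restr m u) (restr m v))"

(* order embedding Q -> (-1,1) and its inverse *)
definition emb :: "rat \<Rightarrow> rat" where "emb x = x / (1 + \<bar>x\<bar>)"
definition emb_inv :: "rat \<Rightarrow> rat" where "emb_inv y = y / (1 - \<bar>y\<bar>)"

definition concat_word :: "'a iword \<Rightarrow> 'a iword \<Rightarrow> 'a iword" where
  "concat_word u v =
     ((\<lambda>x. emb x - 1) ` fst u \<union> (\<lambda>x. emb x + 1) ` fst v,
      \<lambda>y. if y < 0 then snd u (emb_inv (y + 1)) else snd v (emb_inv (y - 1)))"

definition empty_word :: "'a iword" where
  "empty_word = ({}, \<lambda>_. undefined)"

definition word_class :: "(nat \<Rightarrow> 'a monoid) \<Rightarrow> 'a iword \<Rightarrow> 'a iword set" where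
  "word_class G u = {v. is_word G v \<and> word_equiv G u v}"

definition TP :: "(nat \<Rightarrow> 'a monoid) \<Rightarrow> ('a iword set) monoid" where
  "TP G = \<lparr> carrier = {word_class G u | u. is_word G u},
           monoid.mult = (\<lambda>A B. word_class G (concat_word (SOME u. u \<in> A) (SOME v. v \<in> B))),
           one = word_class G empty_word \<rparr>"

definition FP :: "(nat \<Rightarrow> 'a monoid) \<Rightarrow> 'a iword set set" where
  "FP G = {word_class G u | u. is_word G u \<and> finite (fst u)}"

definition normal_closure :: "('b, 'c) monoid_scheme \<Rightarrow> 'b set \<Rightarrow> 'b set" where
  "normal_closure H S =
     generate H {g \<otimes>\<^bsub>H\<^esub> s \<otimes>\<^bsub>H\<^esub> inv\<^bsub>H\<^esub> g | g s. g \<in> carrier H \<and> s \<in> S}"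

definition archipelago :: "(nat \<Rightarrow> 'a monoid) \<Rightarrow> ('a iword set set) monoid" where
  "archipelago G = TP G Mod normal_closure (TP G) (FP G)"

definition TPk :: "(nat \<Rightarrow> 'a monoid) \<Rightarrow> nat \<Rightarrow> ('a iword set) monoid" where
  "TPk G k = TP (\<lambda>i. G (i + k))"

(* the copy of G_k (single-letter words at index 0) inside TPk G k *)
definition factor_image :: "(nat \<Rightarrow> 'a monoid) \<Rightarrow> nat \<Rightarrow> 'a iword set set" where
  "factor_image G k =
     {word_class (\<lambda>i. G (i + k)) ({0}, \<lambda>_. (0, g)) | g. g \<in> carrier (G k) - {\<one>\<^bsub>G k\<^esub>}}"

definition del_word :: "'a iword \<Rightarrow> 'a iword" where
  "del_word u = ({x\<in>fst u. fst (snd u x) \<noteq> 0}, \<lambda>x. (fst (snd u x) - 1, snd (snd u x)))"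

definition phi :: "(nat \<Rightarrow> 'a monoid) \<Rightarrow> nat \<Rightarrow> 'a iword set \<Rightarrow> 'a iword set" where
  "phi G k Y = word_class (\<lambda>i. G (i + Suc k)) (del_word (SOME u. u \<in> Y))"

definition shift_word :: "nat \<Rightarrow> 'a iword \<Rightarrow> 'a iword" where
  "shift_word k u = (fst u, \<lambda>x. (fst (snd u x) + k, snd (snd u x)))"

definition psi :: "(nat \<Rightarrow> 'a monoid) \<Rightarrow> nat \<Rightarrow> 'a iword set \<Rightarrow> 'a iword set set" where
  "psi G k Y = normal_closure (TP G) (FP G) #>\<^bsub>TP G\<^esub> word_class G (shift_word k (SOME u. u \<in> Y))"

end

theory Submission
  imports Defs
begin


lemma fp_eq_refl[simp]: "fp_eq G xs xs" by (simp add: fp_eq_def)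
lemma fp_eq_sym: "fp_eq G xs ys \<Longrightarrow> fp_eq G ys xs"
  unfolding fp_eq_def
proof (induction rule: rtranclp_induct)
  case (step y z)
  then have "(symclp (fp_step G))\<^sup>*\<^sup>* z y" by (auto simp: symclp_def)
  with step show ?case by auto
qed simp
lemma fp_eq_trans: "fp_eq G xs ys \<Longrightarrow> fp_eq G ys zs \<Longrightarrow> fp_eq G xs zs"
  unfolding fp_eq_def by auto
lemma fp_eq_step: "fp_step G xs ys \<Longrightarrow> fp_eq G xs ys"
  unfolding fp_eq_def by auto

lemma fp_step_ctx: "fp_step G xs ys \<Longrightarrow> fp_step G (as @ xs @ bs) (as @ ys @ bs)"
proof (induction rule: fp_step.induct)
  case (merge a n b xs ys)
  then show ?case using fp_step.merge[of a G n b "as @ xs" "ys @ bs"] by simp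
next
  case (delete xs n ys)
  then show ?case using fp_step.delete[of G "as @ xs" n "ys @ bs"] by simp
qed

lemma fp_eq_ctx: "fp_eq G xs ys \<Longrightarrow> fp_eq G (as @ xs @ bs) (as @ ys @ bs)"
  unfolding fp_eq_def
proof (induction rule: rtranclp_induct)
  case base then show ?case by simp
next
  case (step y z)
  from step(2) have "symclp (fp_step G) (as @ y @ bs) (as @ z @ bs)"
    by (auto simp: symclp_def intro: fp_step_ctx)
  with step(3) show ?case by (meson rtranclp.rtrancl_into_rtrancl)
qed

lemma fp_eq_append: "fp_eq G xs ys \<Longrightarrow> fp_eq G xs' ys' \<Longrightarrow> fp_eq G (xs @ xs') (ys @ ys')"
  using fp_eq_ctx[of G xs ys "[]" xs'] fp_eq_ctx[of G xs' ys' ys "[]"]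
  by (auto intro: fp_eq_trans)

definition fmap :: "(nat \<Rightarrow> bool) \<Rightarrow> (nat \<Rightarrow> nat) \<Rightarrow> 'a letter list \<Rightarrow> 'a letter list" where
  "fmap P \<sigma> xs = map (\<lambda>(n, a). (\<sigma> n, a)) (filter (\<lambda>l. P (fst l)) xs)"

lemma fmap_append[simp]: "fmap P \<sigma> (xs @ ys) = fmap P \<sigma> xs @ fmap P \<sigma> ys"
  by (simp add: fmap_def)
lemma fmap_Cons[simp]: "fmap P \<sigma> ((n,a) # ys) = (if P n then [(\<sigma> n, a)] else []) @ fmap P \<sigma> ys"
  by (simp add: fmap_def)

lemma fp_step_fmap:
  assumes "\<And>n. P n \<Longrightarrow> H (\<sigma> n) = G n" "fp_step G xs ys"
  shows "fp_eq H (fmap P \<sigma> xs) (fmap P \<sigma> ys)"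
  using assms(2)
proof (induction rule: fp_step.induct)
  case (merge a n b xs ys)
  show ?case
  proof (cases "P n")
    case True
    then show ?thesis using fp_step.merge[of a H "\<sigma> n" b "fmap P \<sigma> xs" "fmap P \<sigma> ys"] assms(1)[OF True] merge
      by (auto intro: fp_eq_step)
  qed simp
next
  case (delete xs n ys)
  show ?case
  proof (cases "P n")
    case True
    then show ?thesis using fp_step.delete[of H "fmap P \<sigma> xs" "\<sigma> n" "fmap P \<sigma> ys"] assms(1)[OF True]
      by (auto intro: fp_eq_step)
  qed simp
qed

lemma fp_eq_fmap:
  assumes "\<And>n. P n \<Longrightarrow> H (\<sigma> n) = G n" "fp_eq G xs ys"
  shows "fp_eq H (fmap P \<sigma> xs) (fmap P \<sigma> ys)"
  using assms(2) unfolding fp_eq_def[of G]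
proof (induction rule: rtranclp_induct)
  case base then show ?case by simp
next
  case (step y z)
  from step(2) have "fp_eq H (fmap P \<sigma> y) (fmap P \<sigma> z)"
    using fp_step_fmap[of P H \<sigma> G, OF assms(1)] by (auto simp: symclp_def intro: fp_eq_sym)
  with step(3) show ?case by (blast intro: fp_eq_trans)
qed

definition invl :: "(nat \<Rightarrow> 'a monoid) \<Rightarrow> 'a letter \<Rightarrow> 'a letter" where
  "invl G l = (fst l, inv\<^bsub>G (fst l)\<^esub> snd l)"

lemma fp_eq_inv_cancel:
  assumes "\<And>n. group (G n)" "\<forall>l\<in>set xs. snd l \<in> carrier (G (fst l))"
  shows "fp_eq G (as @ rev (map (invl G) xs) @ xs @ bs) (as @ bs)"
  using assms(2)
proof (induction xs arbitrary: bs)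
  case Nil then show ?case by simp
next
  case (Cons x xs)
  obtain n a where x: "x = (n, a)" by fastforce
  with Cons.prems have a: "a \<in> carrier (G n)" by auto
  interpret group "G n" by (rule assms(1))
  let ?C = "as @ rev (map (invl G) xs)"
  have "fp_step G (?C @ (n, inv\<^bsub>G n\<^esub> a) # (n, a) # xs @ bs) (?C @ (n, inv\<^bsub>G n\<^esub> a \<otimes>\<^bsub>G n\<^esub> a) # xs @ bs)"
    by (rule fp_step.merge) (use a in auto)
  moreover have "fp_step G (?C @ (n, \<one>\<^bsub>G n\<^esub>) # xs @ bs) (?C @ xs @ bs)"
    by (rule fp_step.delete)
  ultimately have s1: "fp_eq G (?C @ (n, inv\<^bsub>G n\<^esub> a) # (n, a) # xs @ bs) (?C @ xs @ bs)"
    using a by (auto intro: fp_eq_step fp_eq_trans)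
  have s2: "fp_eq G (?C @ xs @ bs) (as @ bs)" using Cons by auto
  have e: "as @ rev (map (invl G) (x # xs)) @ (x # xs) @ bs = ?C @ (n, inv\<^bsub>G n\<^esub> a) # (n, a) # xs @ bs"
    using x by (simp add: invl_def)
  show ?case unfolding e by (rule fp_eq_trans[OF s1 s2])
qed




lemma emb_p1: "1 + \<bar>x::rat\<bar> > 0" by (simp add: add_pos_nonneg)

lemma emb_abs: "\<bar>emb x\<bar> = \<bar>x\<bar> / (1 + \<bar>x\<bar>)"
proof -
  have "\<bar>1 + \<bar>x\<bar>\<bar> = 1 + \<bar>x\<bar>" using emb_p1[of x] by (rule abs_of_pos)
  then show ?thesis unfolding emb_def abs_divide by simp
qed

lemma emb_bound: "\<bar>emb x\<bar> < 1"
  unfolding emb_abs using emb_p1[of x] by (simp add: divide_less_eq)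

lemma emb_inv_emb[simp]: "emb_inv (emb x) = x"
proof -
  have p: "1 + \<bar>x\<bar> > 0" by (rule emb_p1)
  have "1 - \<bar>emb x\<bar> = 1 / (1 + \<bar>x\<bar>)" unfolding emb_abs using p by (simp add: field_simps)
  then have "emb_inv (emb x) = (x / (1 + \<bar>x\<bar>)) / (1 / (1 + \<bar>x\<bar>))" unfolding emb_inv_def emb_def by simp
  also have "\<dots> = x" using p by simp
  finally show ?thesis .
qed

lemma emb_mono: "x < y \<Longrightarrow> emb x < emb y"
proof -
  assume xy: "x < y"
  have p: "1 + \<bar>x\<bar> > 0" "1 + \<bar>y\<bar> > 0" by (rule emb_p1)+
  have "x * (1 + \<bar>y\<bar>) < y * (1 + \<bar>x\<bar>)"
  proof (cases "x \<ge> 0")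
    case True then have "y \<ge> 0" using xy by linarith
    then show ?thesis using True xy by (simp add: algebra_simps)
  next
    case False
    show ?thesis
    proof (cases "y \<ge> 0")
      case True
      have a: "x * (1 + \<bar>y\<bar>) < 0" using False p(2) by (simp add: mult_neg_pos)
      have b: "0 \<le> y * (1 + \<bar>x\<bar>)" using True p(1) by simp
      show ?thesis using a b by linarith
    next
      case F2: False
      then show ?thesis using False xy by (simp add: algebra_simps)
    qed
  qed
  then show ?thesis unfolding emb_def using p by (simp add: divide_less_eq less_divide_eq mult.commute)
qed

lemma emb_inj: "emb x = emb y \<Longrightarrow> x = y"
  by (metis emb_inv_emb)



lemma sl_eqI:
  fixes A :: "'b::linorder set"
  assumes "finite A" "sorted_wrt (<) l" "set l = A"
  shows "sorted_list_of_set A = l"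
  using assms by (metis strict_sorted_equal sorted_list_of_set.strict_sorted_key_list_of_set set_sorted_list_of_set)

lemma sl_filter:
  fixes A :: "'b::linorder set"
  assumes "finite A"
  shows "sorted_list_of_set {x\<in>A. P x} = filter P (sorted_list_of_set A)"
  by (rule sl_eqI) (use assms in \<open>auto simp: sorted_wrt_filter\<close>)

lemma sl_image:
  fixes A :: "'b::linorder set" and f :: "'b \<Rightarrow> 'c::linorder"
  assumes "finite A" "\<And>x y. x \<in> A \<Longrightarrow> y \<in> A \<Longrightarrow> x < y \<Longrightarrow> f x < f y"
  shows "sorted_list_of_set (f ` A) = map f (sorted_list_of_set A)"
proof (rule sl_eqI)
  have "sorted_wrt (<) (sorted_list_of_set A)" by simp
  then show "sorted_wrt (<) (map f (sorted_list_of_set A))"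
    unfolding sorted_wrt_map using assms
    by (auto intro: sorted_wrt_mono_rel[where P="(<)"])
qed (use assms in auto)

lemma sl_union:
  fixes A :: "'b::linorder set"
  assumes "finite A" "finite B" "\<And>a b. a \<in> A \<Longrightarrow> b \<in> B \<Longrightarrow> a < b"
  shows "sorted_list_of_set (A \<union> B) = sorted_list_of_set A @ sorted_list_of_set B"
  by (rule sl_eqI) (use assms in \<open>auto simp: sorted_wrt_append\<close>)

lemma sl_neg:
  fixes A :: "rat set"
  assumes "finite A"
  shows "sorted_list_of_set (uminus ` A) = rev (map uminus (sorted_list_of_set A))"
proof (rule sl_eqI)
  have "sorted_wrt (<) (sorted_list_of_set A)" by simp
  then show "sorted_wrt (<) (rev (map uminus (sorted_list_of_set A)))"
    unfolding sorted_wrt_rev sorted_wrt_map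
    by (auto intro: sorted_wrt_mono_rel[where P="(<)"])
qed (use assms in auto)

definition idx :: "'a iword \<Rightarrow> rat \<Rightarrow> nat" where "idx u x = fst (snd u x)"

definition lset :: "nat \<Rightarrow> 'a iword \<Rightarrow> rat set" where
  "lset m u = {x\<in>fst u. fst (snd u x) \<le> m}"

lemma restr_lset: "restr m u = map (snd u) (sorted_list_of_set (lset m u))"
  by (simp add: restr_def lset_def)

lemma finite_lset: "is_word G u \<Longrightarrow> finite (lset m u)"
proof -
  assume w: "is_word G u"
  have "lset m u = (\<Union>n\<le>m. {x\<in>fst u. fst (snd u x) = n})" unfolding lset_def by auto
  then show ?thesis using w unfolding is_word_def by auto
qed

lemma restr_cong:
  assumes "fst u = fst v" "\<And>x. x \<in> fst u \<Longrightarrow> snd u x = snd v x"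
  shows "restr m u = restr m v"
proof -
  have l: "lset m u = lset m v" using assms unfolding lset_def by auto
  show ?thesis unfolding restr_lset l
  proof (cases "finite (lset m v)")
    case True
    then show "map (snd u) (sorted_list_of_set (lset m v)) = map (snd v) (sorted_list_of_set (lset m v))"
      using assms l by (auto simp: lset_def intro!: map_cong)
  qed simp
qed

lemma restr_empty[simp]: "restr m empty_word = []"
  by (simp add: restr_def empty_word_def)

lemma restr_concat:
  assumes "is_word G u" "is_word G v"
  shows "restr m (concat_word u v) = restr m u @ restr m v"
proof -
  let ?f = "\<lambda>x::rat. emb x - 1" and ?g = "\<lambda>x::rat. emb x + 1"
  have fneg: "?f x < 0" for x using emb_bound[of x] by linarith
  have gpos: "?g x > 0" for x using emb_bound[of x] by linarith
  have s1: "snd (concat_word u v) (?f x) = snd u x" for x using fneg[of x] by (simp add: concat_word_def)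
  have s2: "snd (concat_word u v) (?g x) = snd v x" for x using gpos[of x] by (simp add: concat_word_def)
  have L: "lset m (concat_word u v) = ?f ` lset m u \<union> ?g ` lset m v"
  proof -
    have F: "fst (concat_word u v) = ?f ` fst u \<union> ?g ` fst v" by (simp add: concat_word_def)
    show ?thesis unfolding lset_def F by (auto simp: s1 s2)
  qed
  have fu: "finite (lset m u)" "finite (lset m v)" using assms finite_lset by blast+
  have "sorted_list_of_set (lset m (concat_word u v)) =
        map ?f (sorted_list_of_set (lset m u)) @ map ?g (sorted_list_of_set (lset m v))"
  proof -
    have o: "a < b" if ha: "a \<in> ?f ` lset m u" and hb: "b \<in> ?g ` lset m v" for a b
    proof -
      obtain x y where "a = ?f x" "b = ?g y" using ha hb by blast
      then show ?thesis using fneg[of x] gpos[of y] by linarith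
    qed
    have fi: "finite (?f ` lset m u)" "finite (?g ` lset m v)" using fu by auto
    have U: "sorted_list_of_set (?f ` lset m u \<union> ?g ` lset m v) = sorted_list_of_set (?f ` lset m u) @ sorted_list_of_set (?g ` lset m v)"
      by (rule sl_union[OF fi o])
    have I1: "sorted_list_of_set (?f ` lset m u) = map ?f (sorted_list_of_set (lset m u))"
      by (rule sl_image[OF fu(1)]) (simp add: emb_mono)
    have I2: "sorted_list_of_set (?g ` lset m v) = map ?g (sorted_list_of_set (lset m v))"
      by (rule sl_image[OF fu(2)]) (simp add: emb_mono)
    show ?thesis unfolding L U I1 I2 by (rule refl)
  qed
  then show ?thesis unfolding restr_lset using s1 s2 by simp
qed

definition rev_word :: "(nat \<Rightarrow> 'a monoid) \<Rightarrow> 'a iword \<Rightarrow> 'a iword" where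
  "rev_word G u = (uminus ` fst u, \<lambda>x. invl G (snd u (- x)))"

lemma restr_rev:
  assumes "is_word G u"
  shows "restr m (rev_word G u) = rev (map (invl G) (restr m u))"
proof -
  have L: "lset m (rev_word G u) = uminus ` lset m u"
    unfolding lset_def rev_word_def invl_def by force
  have fu: "finite (lset m u)" using assms finite_lset by blast
  show ?thesis unfolding restr_lset L sl_neg[OF fu]
    by (simp add: rev_map rev_word_def comp_def)
qed

lemma restr_del:
  assumes "is_word G u"
  shows "restr m (del_word u) = fmap (\<lambda>n. n \<noteq> 0) (\<lambda>n. n - 1) (restr (Suc m) u)"
proof -
  have L: "lset m (del_word u) = {x\<in>lset (Suc m) u. fst (snd u x) \<noteq> 0}"
    unfolding lset_def del_word_def by auto
  have fu: "finite (lset (Suc m) u)" using assms finite_lset by blast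
  show ?thesis unfolding restr_lset L sl_filter[OF fu] fmap_def
    by (simp add: filter_map comp_def del_word_def case_prod_beta)
qed

lemma restr_shift:
  assumes "is_word G u"
  shows "restr m (shift_word k u) = fmap (\<lambda>n. n + k \<le> m) (\<lambda>n. n + k) (restr m u)"
proof -
  have L: "lset m (shift_word k u) = {x\<in>lset m u. fst (snd u x) + k \<le> m}"
    unfolding lset_def shift_word_def by auto
  have fu: "finite (lset m u)" using assms finite_lset by blast
  show ?thesis unfolding restr_lset L sl_filter[OF fu] fmap_def
    by (simp add: filter_map comp_def shift_word_def case_prod_beta)
qed

definition restrict_word :: "'a iword \<Rightarrow> rat set \<Rightarrow> 'a iword" where
  "restrict_word u S = (fst u \<inter> S, snd u)"

lemma restr_split:
  assumes "is_word G u"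
  shows "restr m u = restr m (restrict_word u {x. x < p}) @
     (if p \<in> fst u \<and> fst (snd u p) \<le> m then [snd u p] else []) @ restr m (restrict_word u {x. p < x})"
proof -
  have fu: "finite (lset m u)" using assms finite_lset by blast
  have L: "lset m u = lset m (restrict_word u {x. x < p}) \<union> ({p} \<inter> lset m u \<union> lset m (restrict_word u {x. p < x}))"
    unfolding lset_def restrict_word_def by auto
  have f1: "finite (lset m (restrict_word u {x. x < p}))" "finite (lset m (restrict_word u {x. p < x}))"
    by (rule finite_subset[OF _ fu], auto simp: lset_def restrict_word_def)+
  have "sorted_list_of_set (lset m u) = sorted_list_of_set (lset m (restrict_word u {x. x < p})) @
     sorted_list_of_set ({p} \<inter> lset m u) @ sorted_list_of_set (lset m (restrict_word u {x. p < x}))"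
    apply (subst L)
    apply (subst sl_union)
    using f1 apply (auto simp: lset_def restrict_word_def)[3]
    apply (subst sl_union)
    using f1 apply (auto simp: lset_def restrict_word_def)[3]
    apply simp
    done
  moreover have "sorted_list_of_set ({p} \<inter> lset m u) = (if p \<in> fst u \<and> fst (snd u p) \<le> m then [p] else [])"
    by (auto simp: lset_def)
  ultimately show ?thesis unfolding restr_lset by (simp add: restrict_word_def)
qed

definition sw :: "'a letter \<Rightarrow> 'a iword" where "sw l = ({0}, \<lambda>_. l)"

lemma restr_sw: "restr m (sw l) = (if fst l \<le> m then [l] else [])"
  by (simp add: restr_def sw_def)

lemma restrict_restrict[simp]: "restrict_word (restrict_word u S) T = restrict_word u (S \<inter> T)"
  by (simp add: restrict_word_def Int_assoc)




lemma is_word_empty[simp]: "is_word G empty_word"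
  by (simp add: is_word_def empty_word_def)

lemma is_word_concat:
  assumes "is_word G u" "is_word G v"
  shows "is_word G (concat_word u v)"
proof -
  let ?f = "\<lambda>x::rat. emb x - 1" and ?g = "\<lambda>x::rat. emb x + 1"
  have fneg: "?f x < 0" for x using emb_bound[of x] by linarith
  have gpos: "?g x > 0" for x using emb_bound[of x] by linarith
  have s1: "snd (concat_word u v) (?f x) = snd u x" for x using fneg[of x] by (simp add: concat_word_def)
  have s2: "snd (concat_word u v) (?g x) = snd v x" for x using gpos[of x] by (simp add: concat_word_def)
  have F: "fst (concat_word u v) = ?f ` fst u \<union> ?g ` fst v" by (simp add: concat_word_def)
  have N: "{x\<in>fst (concat_word u v). fst (snd (concat_word u v) x) = n} =
     ?f ` {x\<in>fst u. fst (snd u x) = n} \<union> ?g ` {x\<in>fst v. fst (snd v x) = n}" for n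
    unfolding F by (auto simp: s1 s2)
  show ?thesis using assms unfolding is_word_def N by (auto simp: F s1 s2)
qed

lemma invl_fst[simp]: "fst (invl G l) = fst l"
  by (simp add: invl_def)

lemma is_word_rev:
  assumes grp: "\<And>n. group (G n)" and w: "is_word G u"
  shows "is_word G (rev_word G u)"
proof -
  have N: "{x\<in>fst (rev_word G u). fst (snd (rev_word G u) x) = n} = uminus ` {x\<in>fst u. fst (snd u x) = n}" for n
    unfolding rev_word_def by force
  have L: "snd (invl G l) \<in> carrier (G (fst l)) - {\<one>\<^bsub>G (fst l)\<^esub>}"
    if "snd l \<in> carrier (G (fst l)) - {\<one>\<^bsub>G (fst l)\<^esub>}" for l
  proof -
    interpret group "G (fst l)" by (rule grp)
    show ?thesis using that unfolding invl_def by (auto simp: inv_eq_one_eq)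
  qed
  have L2: "\<forall>x\<in>fst u. snd (invl G (snd u x)) \<in> carrier (G (fst (snd u x))) - {\<one>\<^bsub>G (fst (snd u x))\<^esub>}"
    using w L unfolding is_word_def by blast
  show ?thesis using w L2 unfolding is_word_def N
    by (auto simp: rev_word_def)
qed

lemma is_word_del:
  assumes "\<And>i. H i = G (Suc i)" "is_word G u"
  shows "is_word H (del_word u)"
proof -
  have N: "{x\<in>fst (del_word u). fst (snd (del_word u) x) = n} \<subseteq> {x\<in>fst u. fst (snd u x) = Suc n}" for n
    unfolding del_word_def by auto
  show ?thesis using assms unfolding is_word_def
    apply (intro conjI)
    subgoal by (auto simp: del_word_def)
    subgoal using N by (meson finite_subset)
    done
qed

lemma is_word_shift:
  assumes "\<And>i. G i = H (i + k)" "is_word G u"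
  shows "is_word H (shift_word k u)"
proof -
  have N: "{x\<in>fst (shift_word k u). fst (snd (shift_word k u) x) = n} \<subseteq> {x\<in>fst u. fst (snd u x) = n - k}" for n
    unfolding shift_word_def by auto
  show ?thesis using assms unfolding is_word_def
    apply (intro conjI)
    subgoal by (auto simp: shift_word_def)
    subgoal using N by (meson finite_subset)
    done
qed

lemma is_word_restrict:
  assumes "is_word G u"
  shows "is_word G (restrict_word u S)"
  using assms unfolding is_word_def restrict_word_def
  by (auto elim: finite_subset[rotated])

lemma is_word_sw:
  assumes "snd l \<in> carrier (G (fst l)) - {\<one>\<^bsub>G (fst l)\<^esub>}"
  shows "is_word G (sw l)"
  using assms unfolding is_word_def sw_def by auto

lemma word_equiv_refl[simp]: "word_equiv G u u" by (simp add: word_equiv_def)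
lemma word_equiv_sym: "word_equiv G u v \<Longrightarrow> word_equiv G v u"
  by (simp add: word_equiv_def fp_eq_sym)
lemma word_equiv_trans: "word_equiv G u v \<Longrightarrow> word_equiv G v w \<Longrightarrow> word_equiv G u w"
  unfolding word_equiv_def by (blast intro: fp_eq_trans)
lemma word_equiv_restrI: "(\<And>m. restr m u = restr m v) \<Longrightarrow> word_equiv G u v"
  by (simp add: word_equiv_def)

lemma in_class: "is_word G u \<Longrightarrow> u \<in> word_class G u"
  by (simp add: word_class_def)

lemma class_eqI: "word_equiv G u v \<Longrightarrow> word_class G u = word_class G v"
  unfolding word_class_def by (auto intro: word_equiv_trans word_equiv_sym)

lemma class_eq_iff: "is_word G v \<Longrightarrow> word_class G u = word_class G v \<longleftrightarrow> word_equiv G u v"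
  by (metis class_eqI in_class mem_Collect_eq word_class_def word_equiv_sym)

lemma some_class:
  assumes "is_word G u"
  shows "is_word G (SOME v. v \<in> word_class G u) \<and> word_equiv G u (SOME v. v \<in> word_class G u)"
proof -
  have "(SOME v. v \<in> word_class G u) \<in> word_class G u" using in_class[OF assms] by (rule someI)
  then show ?thesis by (simp add: word_class_def)
qed

lemma class_some: "is_word G u \<Longrightarrow> word_class G (SOME v. v \<in> word_class G u) = word_class G u"
  using some_class class_eqI word_equiv_sym by metis

lemma concat_equiv:
  assumes "is_word G u" "is_word G v" "is_word G u'" "is_word G v'" "word_equiv G u u'" "word_equiv G v v'"
  shows "word_equiv G (concat_word u v) (concat_word u' v')"
  using assms unfolding word_equiv_def by (simp add: restr_concat fp_eq_append)

lemma carrier_TP: "carrier (TP G) = {word_class G u | u. is_word G u}"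
  by (simp add: TP_def)

lemma one_TP: "\<one>\<^bsub>TP G\<^esub> = word_class G empty_word"
  by (simp add: TP_def)

lemma mult_TP:
  assumes "is_word G u" "is_word G v"
  shows "word_class G u \<otimes>\<^bsub>TP G\<^esub> word_class G v = word_class G (concat_word u v)"
proof -
  have "word_class G u \<otimes>\<^bsub>TP G\<^esub> word_class G v =
        word_class G (concat_word (SOME x. x \<in> word_class G u) (SOME x. x \<in> word_class G v))"
    by (simp add: TP_def)
  also have "\<dots> = word_class G (concat_word u v)"
    using some_class[OF assms(1)] some_class[OF assms(2)] assms
    by (intro class_eqI concat_equiv) (auto intro: word_equiv_sym)
  finally show ?thesis .
qed



lemma carrier_TP_E:
  "XX \<in> carrier (TP G) \<Longrightarrow> \<exists>u. is_word G u \<and> XX = word_class G u"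
  by (auto simp: carrier_TP)

lemma group_TP:
  assumes grp: "\<And>n. group (G n)"
  shows "group (TP G)"
proof (rule groupI)
  fix XX YY assume "XX \<in> carrier (TP G)" "YY \<in> carrier (TP G)"
  then obtain u v where "is_word G u" "XX = word_class G u" "is_word G v" "YY = word_class G v"
    using carrier_TP_E by metis
  then show "XX \<otimes>\<^bsub>TP G\<^esub> YY \<in> carrier (TP G)"
  proof -
    have "word_class G (concat_word u v) \<in> carrier (TP G)"
      unfolding carrier_TP using is_word_concat \<open>is_word G u\<close> \<open>is_word G v\<close> by blast
    then show ?thesis using \<open>is_word G u\<close> \<open>is_word G v\<close> \<open>XX = _\<close> \<open>YY = _\<close> by (simp add: mult_TP)
  qed
next
  show "\<one>\<^bsub>TP G\<^esub> \<in> carrier (TP G)" unfolding carrier_TP one_TP using is_word_empty by blast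
next
  fix XX YY ZZ assume "XX \<in> carrier (TP G)" "YY \<in> carrier (TP G)" "ZZ \<in> carrier (TP G)"
  then obtain u v w where w: "is_word G u" "XX = word_class G u" "is_word G v" "YY = word_class G v"
     "is_word G w" "ZZ = word_class G w"
    using carrier_TP_E by metis
  then show "XX \<otimes>\<^bsub>TP G\<^esub> YY \<otimes>\<^bsub>TP G\<^esub> ZZ = XX \<otimes>\<^bsub>TP G\<^esub> (YY \<otimes>\<^bsub>TP G\<^esub> ZZ)"
    by (simp add: mult_TP is_word_concat, intro class_eqI word_equiv_restrI)
       (simp add: restr_concat[where G=G] is_word_concat)
next
  fix XX assume "XX \<in> carrier (TP G)"
  then obtain u where w: "is_word G u" "XX = word_class G u" using carrier_TP_E by metis
  then show "\<one>\<^bsub>TP G\<^esub> \<otimes>\<^bsub>TP G\<^esub> XX = XX"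
    by (simp add: one_TP mult_TP, intro class_eqI word_equiv_restrI)
       (simp add: restr_concat[where G=G])
next
  fix XX assume "XX \<in> carrier (TP G)"
  then obtain u where w: "is_word G u" "XX = word_class G u" using carrier_TP_E by metis
  have r: "is_word G (rev_word G u)" by (rule is_word_rev[OF grp w(1)])
  have "word_class G (rev_word G u) \<otimes>\<^bsub>TP G\<^esub> XX = \<one>\<^bsub>TP G\<^esub>"
  proof -
    have "word_equiv G (concat_word (rev_word G u) u) empty_word"
      unfolding word_equiv_def
    proof
      fix m
      have c: "\<forall>l\<in>set (restr m u). snd l \<in> carrier (G (fst l))"
        using w(1) finite_lset[OF w(1), of m] unfolding is_word_def restr_lset by (auto simp: lset_def)
      show "fp_eq G (restr m (concat_word (rev_word G u) u)) (restr m empty_word)"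
        using fp_eq_inv_cancel[OF grp c, of "[]" "[]"]
        by (simp add: restr_concat[OF r w(1)] restr_rev[OF w(1)])
    qed
    then show ?thesis using w r by (simp add: mult_TP one_TP class_eqI)
  qed
  then show "\<exists>YY\<in>carrier (TP G). YY \<otimes>\<^bsub>TP G\<^esub> XX = \<one>\<^bsub>TP G\<^esub>"
  proof -
    have "word_class G (rev_word G u) \<in> carrier (TP G)" unfolding carrier_TP using r by blast
    then show ?thesis using \<open>word_class G (rev_word G u) \<otimes>\<^bsub>TP G\<^esub> XX = \<one>\<^bsub>TP G\<^esub>\<close> by blast
  qed
qed




lemma del_equiv:
  assumes "\<And>i. H i = G (Suc i)" "is_word G u" "is_word G v" "word_equiv G u v"
  shows "word_equiv H (del_word u) (del_word v)"
  unfolding word_equiv_def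
proof
  fix m
  have "fp_eq H (fmap (\<lambda>n. n \<noteq> 0) (\<lambda>n. n - 1) (restr (Suc m) u)) (fmap (\<lambda>n. n \<noteq> 0) (\<lambda>n. n - 1) (restr (Suc m) v))"
    by (rule fp_eq_fmap) (use assms in \<open>auto simp: word_equiv_def\<close>)
  then show "fp_eq H (restr m (del_word u)) (restr m (del_word v))"
    by (simp add: restr_del[OF assms(2)] restr_del[OF assms(3)])
qed

lemma shift_equiv:
  assumes "\<And>i. G i = H (i + k)" "is_word G u" "is_word G v" "word_equiv G u v"
  shows "word_equiv H (shift_word k u) (shift_word k v)"
  unfolding word_equiv_def
proof
  fix m
  have "fp_eq H (fmap (\<lambda>n. n + k \<le> m) (\<lambda>n. n + k) (restr m u)) (fmap (\<lambda>n. n + k \<le> m) (\<lambda>n. n + k) (restr m v))"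
    by (rule fp_eq_fmap[where G=G]) (use assms in \<open>auto simp: word_equiv_def\<close>)
  then show "fp_eq H (restr m (shift_word k u)) (restr m (shift_word k v))"
    by (simp add: restr_shift[OF assms(2)] restr_shift[OF assms(3)])
qed

lemma del_concat:
  assumes "\<And>i. H i = G (Suc i)" "is_word G u" "is_word G v"
  shows "word_equiv H (del_word (concat_word u v)) (concat_word (del_word u) (del_word v))"
proof (rule word_equiv_restrI)
  fix m
  have w: "is_word H (del_word u)" "is_word H (del_word v)" using assms is_word_del by blast+
  show "restr m (del_word (concat_word u v)) = restr m (concat_word (del_word u) (del_word v))"
    by (simp add: restr_del[OF is_word_concat[OF assms(2,3)]] restr_concat[OF assms(2,3)]
       restr_concat[OF w] restr_del[OF assms(2)] restr_del[OF assms(3)])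
qed

lemma shift_concat:
  assumes "\<And>i. G i = H (i + k)" "is_word G u" "is_word G v"
  shows "word_equiv H (shift_word k (concat_word u v)) (concat_word (shift_word k u) (shift_word k v))"
proof (rule word_equiv_restrI)
  fix m
  have w: "is_word H (shift_word k u)" "is_word H (shift_word k v)" using assms is_word_shift by blast+
  show "restr m (shift_word k (concat_word u v)) = restr m (concat_word (shift_word k u) (shift_word k v))"
    by (simp add: restr_shift[OF is_word_concat[OF assms(2,3)]] restr_concat[OF assms(2,3)]
       restr_concat[OF w] restr_shift[OF assms(2)] restr_shift[OF assms(3)])
qed

lemma restrict_cong: "fst u \<inter> S = fst u \<inter> T \<Longrightarrow> restrict_word u S = restrict_word u T"
  by (simp add: restrict_word_def)

lemma class_in_TP: "is_word H u \<Longrightarrow> word_class H u \<in> carrier (TP H)"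
  unfolding carrier_TP by blast

lemma split_class:
  assumes "is_word H u" "p \<in> fst u"
  shows "word_class H u = word_class H (restrict_word u {x. x < p}) \<otimes>\<^bsub>TP H\<^esub> word_class H (sw (snd u p))
     \<otimes>\<^bsub>TP H\<^esub> word_class H (restrict_word u {x. p < x})"
    (is "_ = ?A \<otimes>\<^bsub>TP H\<^esub> ?S \<otimes>\<^bsub>TP H\<^esub> ?B")
proof -
  have wa: "is_word H (restrict_word u {x. x < p})" "is_word H (restrict_word u {x. p < x})"
    using assms is_word_restrict by blast+
  have ws: "is_word H (sw (snd u p))" using assms by (intro is_word_sw) (auto simp: is_word_def)
  have "?A \<otimes>\<^bsub>TP H\<^esub> ?S \<otimes>\<^bsub>TP H\<^esub> ?B = word_class H (concat_word (concat_word (restrict_word u {x. x < p}) (sw (snd u p))) (restrict_word u {x. p < x}))"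
    using wa ws by (simp add: mult_TP is_word_concat)
  also have "\<dots> = word_class H u"
  proof (rule class_eqI, rule word_equiv_restrI)
    fix m
    show "restr m (concat_word (concat_word (restrict_word u {x. x < p}) (sw (snd u p))) (restrict_word u {x. p < x})) = restr m u"
      using restr_split[OF assms(1), of m p] assms(2)
      by (simp add: restr_concat[OF is_word_concat[OF wa(1) ws] wa(2)] restr_concat[OF wa(1) ws] restr_sw)
  qed
  finally show ?thesis by simp
qed

lemma split_class2:
  assumes "is_word H u" "p \<in> fst u"
  shows "word_class H (restrict_word u (- {p})) = word_class H (restrict_word u {x. x < p}) \<otimes>\<^bsub>TP H\<^esub>
     word_class H (restrict_word u {x. p < x})"
proof -
  let ?u = "restrict_word u (- {p})"
  have wu: "is_word H ?u" using assms is_word_restrict by blast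
  have wa: "is_word H (restrict_word u {x. x < p})" "is_word H (restrict_word u {x. p < x})"
    using assms is_word_restrict by blast+
  have e1: "restrict_word ?u {x. x < p} = restrict_word u {x. x < p}"
    by (simp, rule restrict_cong) auto
  have e2: "restrict_word ?u {x. p < x} = restrict_word u {x. p < x}"
    by (simp, rule restrict_cong) auto
  show ?thesis
    using wa
  proof (simp add: mult_TP, intro class_eqI word_equiv_restrI)
    fix m
    have hp: "\<not> (p \<in> fst ?u \<and> fst (snd ?u p) \<le> m)" by (simp add: restrict_word_def)
    have R: "restr m ?u = restr m (restrict_word ?u {x. x < p}) @ restr m (restrict_word ?u {x. p < x})"
      by (subst restr_split[OF wu, of m p]) (simp only: hp if_False append.left_neutral)
    show "restr m ?u = restr m (concat_word (restrict_word u {x. x < p}) (restrict_word u {x. p < x}))"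
      unfolding R e1 e2 restr_concat[OF wa] by (rule refl)
  qed
qed

lemma decomp:
  assumes grp: "\<And>n. group (H n)" and w: "is_word H u" and fin: "finite Z" and sub: "Z \<subseteq> fst u"
    and inS: "\<forall>z\<in>Z. word_class H (sw (snd u z)) \<in> S" and Ssub: "S \<subseteq> carrier (TP H)"
  shows "\<exists>n\<in>normal_closure (TP H) S. word_class H u = n \<otimes>\<^bsub>TP H\<^esub> word_class H (restrict_word u (- Z))"
  using fin sub inS
proof (induction Z rule: finite_induct)
  case empty
  interpret T: group "TP H" by (rule group_TP[OF grp])
  have "restrict_word u (- {}) = u" by (simp add: restrict_word_def)
  then show ?case using w class_in_TP[OF w]
    by (intro bexI[of _ "\<one>\<^bsub>TP H\<^esub>"]) (auto simp: normal_closure_def generate.one)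
next
  case (insert z F)
  interpret T: group "TP H" by (rule group_TP[OF grp])
  from insert obtain n where n: "n \<in> normal_closure (TP H) S" "word_class H u = n \<otimes>\<^bsub>TP H\<^esub> word_class H (restrict_word u (- F))"
    by auto
  let ?u = "restrict_word u (- F)"
  have wu: "is_word H ?u" using w is_word_restrict by blast
  have zu: "z \<in> fst ?u" using insert by (auto simp: restrict_word_def)
  let ?A = "word_class H (restrict_word ?u {x. x < z})"
  let ?B = "word_class H (restrict_word ?u {x. z < x})"
  let ?s = "word_class H (sw (snd ?u z))"
  have A: "?A \<in> carrier (TP H)" "?B \<in> carrier (TP H)"
    using wu is_word_restrict class_in_TP by blast+
  have sS: "?s \<in> S" using insert by (simp add: restrict_word_def)
  then have s: "?s \<in> carrier (TP H)" using Ssub by blast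
  have NCsub: "normal_closure (TP H) S \<subseteq> carrier (TP H)"
    unfolding normal_closure_def by (rule T.generate_incl) (use Ssub in \<open>auto\<close>)
  have nC: "n \<in> carrier (TP H)" using n NCsub by blast
  have conj: "?A \<otimes>\<^bsub>TP H\<^esub> ?s \<otimes>\<^bsub>TP H\<^esub> inv\<^bsub>TP H\<^esub> ?A \<in> normal_closure (TP H) S"
    unfolding normal_closure_def by (rule generate.incl) (use A sS in blast)
  have e: "restrict_word ?u (- {z}) = restrict_word u (- insert z F)"
    by (simp, rule restrict_cong) auto
  have c1: "word_class H ?u = ?A \<otimes>\<^bsub>TP H\<^esub> ?s \<otimes>\<^bsub>TP H\<^esub> ?B" by (rule split_class[OF wu zu])
  have c2: "word_class H (restrict_word u (- insert z F)) = ?A \<otimes>\<^bsub>TP H\<^esub> ?B"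
    using split_class2[OF wu zu] e by simp
  have "word_class H u = (n \<otimes>\<^bsub>TP H\<^esub> (?A \<otimes>\<^bsub>TP H\<^esub> ?s \<otimes>\<^bsub>TP H\<^esub> inv\<^bsub>TP H\<^esub> ?A)) \<otimes>\<^bsub>TP H\<^esub> (?A \<otimes>\<^bsub>TP H\<^esub> ?B)"
  proof -
    have "inv\<^bsub>TP H\<^esub> ?A \<otimes>\<^bsub>TP H\<^esub> (?A \<otimes>\<^bsub>TP H\<^esub> ?B) = ?B"
      using A by (simp add: T.m_assoc[symmetric])
    then show ?thesis unfolding n(2) c1 using A s nC by (simp add: T.m_assoc)
  qed
  moreover have "n \<otimes>\<^bsub>TP H\<^esub> (?A \<otimes>\<^bsub>TP H\<^esub> ?s \<otimes>\<^bsub>TP H\<^esub> inv\<^bsub>TP H\<^esub> ?A) \<in> normal_closure (TP H) S"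
    using n(1) conj unfolding normal_closure_def by (rule generate.eng)
  ultimately show ?case unfolding c2 by blast
qed




lemma del_equiv_k:
  "is_word (\<lambda>i. G (i + k)) u \<Longrightarrow> is_word (\<lambda>i. G (i + k)) v \<Longrightarrow> word_equiv (\<lambda>i. G (i + k)) u v \<Longrightarrow>
   word_equiv (\<lambda>i. G (i + Suc k)) (del_word u) (del_word v)"
  by (rule del_equiv[of "\<lambda>i. G (i + Suc k)" "\<lambda>i. G (i + k)"]) auto

lemma is_word_del_k:
  "is_word (\<lambda>i. G (i + k)) u \<Longrightarrow> is_word (\<lambda>i. G (i + Suc k)) (del_word u)"
  by (rule is_word_del[of "\<lambda>i. G (i + Suc k)" "\<lambda>i. G (i + k)"]) auto

lemma del_concat_k:
  "is_word (\<lambda>i. G (i + k)) u \<Longrightarrow> is_word (\<lambda>i. G (i + k)) v \<Longrightarrow>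
   word_equiv (\<lambda>i. G (i + Suc k)) (del_word (concat_word u v)) (concat_word (del_word u) (del_word v))"
  by (rule del_concat[of "\<lambda>i. G (i + Suc k)" "\<lambda>i. G (i + k)"]) auto

lemma phi_class:
  assumes "is_word (\<lambda>i. G (i + k)) u"
  shows "phi G k (word_class (\<lambda>i. G (i + k)) u) = word_class (\<lambda>i. G (i + Suc k)) (del_word u)"
proof -
  let ?v = "SOME v. v \<in> word_class (\<lambda>i. G (i + k)) u"
  have v: "is_word (\<lambda>i. G (i + k)) ?v" "word_equiv (\<lambda>i. G (i + k)) u ?v"
    using some_class[OF assms] by auto
  have "word_equiv (\<lambda>i. G (i + Suc k)) (del_word u) (del_word ?v)"
    by (rule del_equiv_k[OF assms v])
  then show ?thesis unfolding phi_def by (metis class_eqI word_equiv_sym)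
qed

lemma carrier_TPk_E:
  "YY \<in> carrier (TPk G k) \<Longrightarrow> \<exists>u. is_word (\<lambda>i. G (i + k)) u \<and> YY = word_class (\<lambda>i. G (i + k)) u"
  by (auto simp: TPk_def carrier_TP)

lemma phi_hom: "phi G k \<in> hom (TPk G k) (TPk G (Suc k))"
proof (rule homI)
  fix YY assume "YY \<in> carrier (TPk G k)"
  then obtain u where u: "is_word (\<lambda>i. G (i + k)) u" "YY = word_class (\<lambda>i. G (i + k)) u"
    using carrier_TPk_E by metis
  have "is_word (\<lambda>i. G (i + Suc k)) (del_word u)" by (rule is_word_del_k[OF u(1)])
  then show "phi G k YY \<in> carrier (TPk G (Suc k))"
    unfolding u(2) phi_class[OF u(1)] TPk_def by (rule class_in_TP)
next
  fix XX YY assume "XX \<in> carrier (TPk G k)" "YY \<in> carrier (TPk G k)"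
  then obtain u v where u: "is_word (\<lambda>i. G (i + k)) u" "XX = word_class (\<lambda>i. G (i + k)) u"
    and v: "is_word (\<lambda>i. G (i + k)) v" "YY = word_class (\<lambda>i. G (i + k)) v"
    using carrier_TPk_E by metis
  have du: "is_word (\<lambda>i. G (i + Suc k)) (del_word u)" "is_word (\<lambda>i. G (i + Suc k)) (del_word v)"
    using is_word_del_k u v by blast+
  show "phi G k (XX \<otimes>\<^bsub>TPk G k\<^esub> YY) = phi G k XX \<otimes>\<^bsub>TPk G (Suc k)\<^esub> phi G k YY"
  proof -
    have m1: "XX \<otimes>\<^bsub>TPk G k\<^esub> YY = word_class (\<lambda>i. G (i + k)) (concat_word u v)"
      unfolding u(2) v(2) TPk_def by (rule mult_TP[OF u(1) v(1)])
    have m2: "word_class (\<lambda>i. G (i + Suc k)) (del_word u) \<otimes>\<^bsub>TP (\<lambda>i. G (i + Suc k))\<^esub> word_class (\<lambda>i. G (i + Suc k)) (del_word v)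
       = word_class (\<lambda>i. G (i + Suc k)) (concat_word (del_word u) (del_word v))"
      by (rule mult_TP[OF du])
    show ?thesis
      apply (subst m1)
      apply (unfold phi_class[OF is_word_concat[OF u(1) v(1)]] u(2) v(2))
      apply (unfold phi_class[OF u(1)] phi_class[OF v(1)] TPk_def m2)
      by (rule class_eqI[OF del_concat_k[OF u(1) v(1)]])
  qed
qed

lemma phi_surj: "phi G k ` carrier (TPk G k) = carrier (TPk G (Suc k))"
proof
  show "phi G k ` carrier (TPk G k) \<subseteq> carrier (TPk G (Suc k))"
    using phi_hom by (auto simp: hom_def)
next
  show "carrier (TPk G (Suc k)) \<subseteq> phi G k ` carrier (TPk G k)"
  proof
    fix YY assume "YY \<in> carrier (TPk G (Suc k))"
    then obtain v where v: "is_word (\<lambda>i. G (i + Suc k)) v" "YY = word_class (\<lambda>i. G (i + Suc k)) v"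
      using carrier_TPk_E by metis
    have w: "is_word (\<lambda>i. G (i + k)) (shift_word 1 v)" by (rule is_word_shift[OF _ v(1)]) simp
    have d: "del_word (shift_word 1 v) = v" by (simp add: del_word_def shift_word_def)
    have "phi G k (word_class (\<lambda>i. G (i + k)) (shift_word 1 v)) = YY"
      unfolding phi_class[OF w] d v(2) ..
    moreover have "word_class (\<lambda>i. G (i + k)) (shift_word 1 v) \<in> carrier (TPk G k)"
      unfolding TPk_def by (rule class_in_TP[OF w])
    ultimately show "YY \<in> phi G k ` carrier (TPk G k)" by blast
  qed
qed




lemma group_TPk: "(\<And>n. group (G n)) \<Longrightarrow> group (TPk G k)"
  unfolding TPk_def by (rule group_TP) auto

lemma one_TPk: "\<one>\<^bsub>TPk G k\<^esub> = word_class (\<lambda>i. G (i + k)) empty_word"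
  by (simp add: TPk_def one_TP)

lemma fmap_undo: "\<forall>l\<in>set L. fst l \<noteq> 0 \<Longrightarrow> fmap (\<lambda>_. True) Suc (fmap (\<lambda>n. n \<noteq> 0) (\<lambda>n. n - 1) L) = L"
  by (induction L) (auto simp: fmap_def)

lemma class_empty_set: "fst u = {} \<Longrightarrow> word_class G u = word_class G empty_word"
  by (rule class_eqI, rule word_equiv_restrI) (simp add: restr_def empty_word_def)

lemma NC_sub:
  assumes "group T" "S \<subseteq> carrier T"
  shows "normal_closure T S \<subseteq> carrier T"
proof -
  interpret group T by fact
  have "{g \<otimes>\<^bsub>T\<^esub> s \<otimes>\<^bsub>T\<^esub> inv\<^bsub>T\<^esub> g |g s. g \<in> carrier T \<and> s \<in> S} \<subseteq> carrier T"
    using assms(2) by auto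
  then show ?thesis unfolding normal_closure_def by (rule generate_incl)
qed

lemma phi_kernel:
  assumes grp: "\<And>n. group (G n)"
  shows "kernel (TPk G k) (TPk G (Suc k)) (phi G k) = normal_closure (TPk G k) (factor_image G k)"
proof -
  interpret T: group "TPk G k" by (rule group_TPk[OF grp])
  interpret T2: group "TPk G (Suc k)" by (rule group_TPk[OF grp])
  interpret h: group_hom "TPk G k" "TPk G (Suc k)" "phi G k"
    by (unfold_locales) (rule phi_hom)
  have FIsub: "factor_image G k \<subseteq> carrier (TPk G k)"
  proof
    fix s assume "s \<in> factor_image G k"
    then obtain g where g: "g \<in> carrier (G k) - {\<one>\<^bsub>G k\<^esub>}" "s = word_class (\<lambda>i. G (i + k)) ({0}, \<lambda>_. (0, g))"
      by (auto simp: factor_image_def)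
    have "is_word (\<lambda>i. G (i + k)) (sw (0, g))" by (rule is_word_sw) (use g in simp)
    then show "s \<in> carrier (TPk G k)" unfolding g(2) TPk_def sw_def[symmetric] by (rule class_in_TP)
  qed
  have FIker: "factor_image G k \<subseteq> kernel (TPk G k) (TPk G (Suc k)) (phi G k)"
  proof
    fix s assume sF: "s \<in> factor_image G k"
    then obtain g where g: "g \<in> carrier (G k) - {\<one>\<^bsub>G k\<^esub>}" "s = word_class (\<lambda>i. G (i + k)) ({0}, \<lambda>_. (0, g))"
      by (auto simp: factor_image_def)
    have w: "is_word (\<lambda>i. G (i + k)) ({0}, \<lambda>_. (0, g))" using is_word_sw[of "(0,g)"] g by (simp add: sw_def)
    have "phi G k s = word_class (\<lambda>i. G (i + Suc k)) (del_word ({0}, \<lambda>_. (0, g)))"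
      unfolding g(2) by (rule phi_class[OF w])
    also have "\<dots> = \<one>\<^bsub>TPk G (Suc k)\<^esub>" unfolding one_TPk
      by (rule class_empty_set) (simp add: del_word_def)
    finally show "s \<in> kernel (TPk G k) (TPk G (Suc k)) (phi G k)"
      using sF FIsub by (auto simp: kernel_def)
  qed
  have kersub: "subgroup (kernel (TPk G k) (TPk G (Suc k)) (phi G k)) (TPk G k)"
    using h.normal_kernel normal_imp_subgroup by blast
  show ?thesis
  proof
    show "normal_closure (TPk G k) (factor_image G k) \<subseteq> kernel (TPk G k) (TPk G (Suc k)) (phi G k)"
      unfolding normal_closure_def
    proof (rule T.generate_subgroup_incl[OF _ kersub])
      show "{g \<otimes>\<^bsub>TPk G k\<^esub> s \<otimes>\<^bsub>TPk G k\<^esub> inv\<^bsub>TPk G k\<^esub> g |g s. g \<in> carrier (TPk G k) \<and> s \<in> factor_image G k}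
        \<subseteq> kernel (TPk G k) (TPk G (Suc k)) (phi G k)"
      proof clarify
        fix g s assume gs: "g \<in> carrier (TPk G k)" "s \<in> factor_image G k"
        then have s: "s \<in> carrier (TPk G k)" "phi G k s = \<one>\<^bsub>TPk G (Suc k)\<^esub>"
          using FIker FIsub by (auto simp: kernel_def)
        show "g \<otimes>\<^bsub>TPk G k\<^esub> s \<otimes>\<^bsub>TPk G k\<^esub> inv\<^bsub>TPk G k\<^esub> g \<in> kernel (TPk G k) (TPk G (Suc k)) (phi G k)"
          using gs s by (simp add: kernel_def h.hom_mult h.hom_inv)
      qed
    qed
  next
    show "kernel (TPk G k) (TPk G (Suc k)) (phi G k) \<subseteq> normal_closure (TPk G k) (factor_image G k)"
    proof
      fix XX assume XX: "XX \<in> kernel (TPk G k) (TPk G (Suc k)) (phi G k)"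
      then obtain u where u: "is_word (\<lambda>i. G (i + k)) u" "XX = word_class (\<lambda>i. G (i + k)) u"
      proof -
        have "XX \<in> carrier (TPk G k)" using XX by (simp add: kernel_def)
        then show ?thesis using carrier_TPk_E that by blast
      qed
      let ?H = "\<lambda>i. G (i + k)"
      let ?Z = "{x\<in>fst u. fst (snd u x) = 0}"
      have fZ: "finite ?Z" using u(1) by (simp add: is_word_def)
      have inS: "\<forall>z\<in>?Z. word_class ?H (sw (snd u z)) \<in> factor_image G k"
      proof
        fix z assume z: "z \<in> ?Z"
        then have "snd (snd u z) \<in> carrier (G k) - {\<one>\<^bsub>G k\<^esub>}" using u(1) by (auto simp: is_word_def)
        moreover have "sw (snd u z) = ({0}, \<lambda>_. (0, snd (snd u z)))" using z
          by (simp add: sw_def) (metis prod.collapse)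
        ultimately show "word_class ?H (sw (snd u z)) \<in> factor_image G k"
          unfolding factor_image_def by (intro CollectI exI[of _ "snd (snd u z)"] conjI) auto
      qed
      have TPH: "TPk G k = TP ?H" by (simp add: TPk_def)
      obtain n where n: "n \<in> normal_closure (TP ?H) (factor_image G k)"
        "word_class ?H u = n \<otimes>\<^bsub>TP ?H\<^esub> word_class ?H (restrict_word u (- ?Z))"
      proof -
        have "\<exists>n\<in>normal_closure (TP ?H) (factor_image G k). word_class ?H u = n \<otimes>\<^bsub>TP ?H\<^esub> word_class ?H (restrict_word u (- ?Z))"
          by (rule decomp[OF _ u(1) fZ _ inS]) (use FIsub grp TPH in auto)
        then show ?thesis using that by blast
      qed
      let ?u0 = "restrict_word u (- ?Z)"
      have w0: "is_word ?H ?u0" using u(1) is_word_restrict by blast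
      have d0: "del_word ?u0 = del_word u" by (auto simp: del_word_def restrict_word_def)
      have "phi G k XX = \<one>\<^bsub>TPk G (Suc k)\<^esub>" using XX by (simp add: kernel_def)
      then have "word_class (\<lambda>i. G (i + Suc k)) (del_word u) = word_class (\<lambda>i. G (i + Suc k)) empty_word"
        unfolding u(2) phi_class[OF u(1)] one_TPk .
      then have de: "word_equiv (\<lambda>i. G (i + Suc k)) (del_word ?u0) empty_word"
        unfolding d0 by (simp add: class_eq_iff)
      have "word_equiv ?H ?u0 empty_word"
        unfolding word_equiv_def
      proof
        fix m
        show "fp_eq ?H (restr m ?u0) (restr m empty_word)"
        proof (cases m)
          case 0
          have "lset 0 ?u0 = {}" by (auto simp: lset_def restrict_word_def)
          then have "restr m ?u0 = []" using 0 by (simp add: restr_lset)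
          then show ?thesis by simp
        next
          case (Suc m')
          have nz: "\<forall>l\<in>set (restr m ?u0). fst l \<noteq> 0"
            using finite_lset[OF w0, of m] by (auto simp: restr_lset lset_def restrict_word_def)
          have "restr m ?u0 = fmap (\<lambda>_. True) Suc (restr m' (del_word ?u0))"
            unfolding restr_del[OF w0] Suc[symmetric] fmap_undo[OF nz] ..
          moreover have "fp_eq ?H (fmap (\<lambda>_. True) Suc (restr m' (del_word ?u0))) (fmap (\<lambda>_. True) Suc (restr m' empty_word))"
            by (rule fp_eq_fmap[where G="\<lambda>i. G (i + Suc k)"]) (use de in \<open>auto simp: word_equiv_def\<close>)
          ultimately show ?thesis by (simp add: fmap_def)
        qed
      qed
      then have "word_class ?H ?u0 = \<one>\<^bsub>TP ?H\<^esub>" by (simp add: one_TP class_eqI)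
      moreover have "n \<in> carrier (TP ?H)"
        using n(1) NC_sub[OF T.is_group FIsub] unfolding TPH by blast
      ultimately have "XX = n" using n(2) u(2) T.r_one unfolding TPH by simp
      then show "XX \<in> normal_closure (TPk G k) (factor_image G k)" using n(1) TPH by simp
    qed
  qed
qed




lemma FP_sub: "FP G \<subseteq> carrier (TP G)"
  unfolding FP_def carrier_TP by blast

lemma N_normal:
  assumes grp: "\<And>n. group (G n)"
  shows "normal_closure (TP G) (FP G) \<lhd> TP G"
proof -
  interpret T: group "TP G" by (rule group_TP[OF grp])
  let ?C = "{g \<otimes>\<^bsub>TP G\<^esub> s \<otimes>\<^bsub>TP G\<^esub> inv\<^bsub>TP G\<^esub> g |g s. g \<in> carrier (TP G) \<and> s \<in> FP G}"
  have Csub: "?C \<subseteq> carrier (TP G)" using FP_sub by auto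
  show ?thesis unfolding normal_closure_def
  proof (rule T.normal_generateI[OF Csub])
    fix h g assume h: "h \<in> ?C" and g: "g \<in> carrier (TP G)"
    then obtain a s where as: "a \<in> carrier (TP G)" "s \<in> FP G" "h = a \<otimes>\<^bsub>TP G\<^esub> s \<otimes>\<^bsub>TP G\<^esub> inv\<^bsub>TP G\<^esub> a"
      by blast
    have sc: "s \<in> carrier (TP G)" using as FP_sub by blast
    have "g \<otimes>\<^bsub>TP G\<^esub> h \<otimes>\<^bsub>TP G\<^esub> inv\<^bsub>TP G\<^esub> g =
       (g \<otimes>\<^bsub>TP G\<^esub> a) \<otimes>\<^bsub>TP G\<^esub> s \<otimes>\<^bsub>TP G\<^esub> inv\<^bsub>TP G\<^esub> (g \<otimes>\<^bsub>TP G\<^esub> a)"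
      using as sc g by (simp add: T.inv_mult_group T.m_assoc)
    moreover have "g \<otimes>\<^bsub>TP G\<^esub> a \<in> carrier (TP G)" using as g by simp
    ultimately show "g \<otimes>\<^bsub>TP G\<^esub> h \<otimes>\<^bsub>TP G\<^esub> inv\<^bsub>TP G\<^esub> g \<in> ?C" using as by blast
  qed
qed

lemma shift_equiv_k:
  "is_word (\<lambda>i. G (i + k)) u \<Longrightarrow> is_word (\<lambda>i. G (i + k)) v \<Longrightarrow> word_equiv (\<lambda>i. G (i + k)) u v \<Longrightarrow>
   word_equiv G (shift_word k u) (shift_word k v)"
  by (rule shift_equiv[of "\<lambda>i. G (i + k)" G k]) auto

lemma is_word_shift_k:
  "is_word (\<lambda>i. G (i + k)) u \<Longrightarrow> is_word G (shift_word k u)"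
  by (rule is_word_shift[of "\<lambda>i. G (i + k)" G k]) auto

lemma shift_concat_k:
  "is_word (\<lambda>i. G (i + k)) u \<Longrightarrow> is_word (\<lambda>i. G (i + k)) v \<Longrightarrow>
   word_equiv G (shift_word k (concat_word u v)) (concat_word (shift_word k u) (shift_word k v))"
  by (rule shift_concat[of "\<lambda>i. G (i + k)" G k]) auto

lemma psi_class:
  assumes "is_word (\<lambda>i. G (i + k)) u"
  shows "psi G k (word_class (\<lambda>i. G (i + k)) u) = normal_closure (TP G) (FP G) #>\<^bsub>TP G\<^esub> word_class G (shift_word k u)"
proof -
  let ?v = "SOME v. v \<in> word_class (\<lambda>i. G (i + k)) u"
  have v: "is_word (\<lambda>i. G (i + k)) ?v" "word_equiv (\<lambda>i. G (i + k)) u ?v"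
    using some_class[OF assms] by auto
  have "word_equiv G (shift_word k u) (shift_word k ?v)"
    by (rule shift_equiv_k[OF assms v])
  then show ?thesis unfolding psi_def by (metis class_eqI word_equiv_sym)
qed

lemma psi_hom:
  assumes grp: "\<And>n. group (G n)"
  shows "psi G k \<in> hom (TPk G k) (archipelago G)"
proof -
  interpret N: normal "normal_closure (TP G) (FP G)" "TP G" by (rule N_normal[OF grp])
  show ?thesis
  proof (rule homI)
    fix YY assume "YY \<in> carrier (TPk G k)"
    then obtain u where u: "is_word (\<lambda>i. G (i + k)) u" "YY = word_class (\<lambda>i. G (i + k)) u"
      using carrier_TPk_E by metis
    show "psi G k YY \<in> carrier (archipelago G)"
      unfolding u(2) psi_class[OF u(1)] archipelago_def FactGroup_def
      using N.rcosetsI[OF N.subset class_in_TP[OF is_word_shift_k[OF u(1)]]] by simp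
  next
    fix XX YY assume "XX \<in> carrier (TPk G k)" "YY \<in> carrier (TPk G k)"
    then obtain u v where u: "is_word (\<lambda>i. G (i + k)) u" "XX = word_class (\<lambda>i. G (i + k)) u"
      and v: "is_word (\<lambda>i. G (i + k)) v" "YY = word_class (\<lambda>i. G (i + k)) v"
      using carrier_TPk_E by metis
    have su: "is_word G (shift_word k u)" "is_word G (shift_word k v)"
      using is_word_shift_k u v by blast+
    have m1: "XX \<otimes>\<^bsub>TPk G k\<^esub> YY = word_class (\<lambda>i. G (i + k)) (concat_word u v)"
      unfolding u(2) v(2) TPk_def by (rule mult_TP[OF u(1) v(1)])
    have "psi G k (XX \<otimes>\<^bsub>TPk G k\<^esub> YY) = normal_closure (TP G) (FP G) #>\<^bsub>TP G\<^esub> word_class G (shift_word k (concat_word u v))"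
      unfolding m1 by (rule psi_class[OF is_word_concat[OF u(1) v(1)]])
    also have "\<dots> = normal_closure (TP G) (FP G) #>\<^bsub>TP G\<^esub> (word_class G (shift_word k u) \<otimes>\<^bsub>TP G\<^esub> word_class G (shift_word k v))"
      using mult_TP[OF su] class_eqI[OF shift_concat_k[OF u(1) v(1)]] by simp
    also have "\<dots> = psi G k XX \<otimes>\<^bsub>archipelago G\<^esub> psi G k YY"
      unfolding u(2) v(2) psi_class[OF u(1)] psi_class[OF v(1)] archipelago_def mult_FactGroup
      by (rule N.rcos_sum[symmetric]) (rule class_in_TP, rule su)+
    finally show "psi G k (XX \<otimes>\<^bsub>TPk G k\<^esub> YY) = psi G k XX \<otimes>\<^bsub>archipelago G\<^esub> psi G k YY" .
  qed
qed

lemma psi_compat: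
  assumes grp: "\<And>n. group (G n)" and YY: "YY \<in> carrier (TPk G k)"
  shows "psi G (Suc k) (phi G k YY) = psi G k YY"
proof -
  interpret T: group "TP G" by (rule group_TP[OF grp])
  interpret N: normal "normal_closure (TP G) (FP G)" "TP G" by (rule N_normal[OF grp])
  obtain u where u: "is_word (\<lambda>i. G (i + k)) u" "YY = word_class (\<lambda>i. G (i + k)) u"
    using carrier_TPk_E YY by metis
  let ?w = "shift_word k u"
  have ww: "is_word G ?w" by (rule is_word_shift_k[OF u(1)])
  let ?Z = "{x\<in>fst u. fst (snd u x) = 0}"
  have fZ: "finite ?Z" using u(1) by (simp add: is_word_def)
  have inS: "\<forall>z\<in>?Z. word_class G (sw (snd ?w z)) \<in> FP G"
  proof
    fix z assume z: "z \<in> ?Z"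
    have "is_word G (sw (snd ?w z))"
      using ww z by (intro is_word_sw) (auto simp: is_word_def shift_word_def)
    then show "word_class G (sw (snd ?w z)) \<in> FP G"
      unfolding FP_def by (auto simp: sw_def)
  qed
  obtain n where n: "n \<in> normal_closure (TP G) (FP G)"
    "word_class G ?w = n \<otimes>\<^bsub>TP G\<^esub> word_class G (restrict_word ?w (- ?Z))"
  proof -
    have "\<exists>n\<in>normal_closure (TP G) (FP G). word_class G ?w = n \<otimes>\<^bsub>TP G\<^esub> word_class G (restrict_word ?w (- ?Z))"
      by (rule decomp[OF grp ww fZ _ inS FP_sub]) (auto simp: shift_word_def)
    then show ?thesis using that by blast
  qed
  have du: "is_word (\<lambda>i. G (i + Suc k)) (del_word u)" by (rule is_word_del_k[OF u(1)])
  have eqw: "word_class G (restrict_word ?w (- ?Z)) = word_class G (shift_word (Suc k) (del_word u))"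
  proof (rule class_eqI, rule word_equiv_restrI, rule restr_cong)
    show "fst (restrict_word ?w (- ?Z)) = fst (shift_word (Suc k) (del_word u))"
      by (auto simp: restrict_word_def shift_word_def del_word_def)
  next
    fix x assume "x \<in> fst (restrict_word ?w (- ?Z))"
    then show "snd (restrict_word ?w (- ?Z)) x = snd (shift_word (Suc k) (del_word u)) x"
      by (auto simp: restrict_word_def shift_word_def del_word_def)
  qed
  have Bc: "word_class G (shift_word (Suc k) (del_word u)) \<in> carrier (TP G)"
    by (rule class_in_TP[OF is_word_shift_k[OF du]])
  have nc: "n \<in> carrier (TP G)" using n(1) N.subset by blast
  have "psi G k YY = normal_closure (TP G) (FP G) #>\<^bsub>TP G\<^esub> (n \<otimes>\<^bsub>TP G\<^esub> word_class G (shift_word (Suc k) (del_word u)))"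
    unfolding u(2) psi_class[OF u(1)] n(2) eqw ..
  also have "\<dots> = (normal_closure (TP G) (FP G) #>\<^bsub>TP G\<^esub> n) #>\<^bsub>TP G\<^esub> word_class G (shift_word (Suc k) (del_word u))"
    by (rule T.coset_mult_assoc[symmetric]) (use N.subset nc Bc in auto)
  also have "\<dots> = normal_closure (TP G) (FP G) #>\<^bsub>TP G\<^esub> word_class G (shift_word (Suc k) (del_word u))"
    using T.coset_join2[OF nc N.subgroup_axioms n(1)] by simp
  also have "\<dots> = psi G (Suc k) (phi G k YY)"
    unfolding u(2) phi_class[OF u(1)] psi_class[OF du] ..
  finally show ?thesis by simp
qed




lemma TPk0: "TPk G 0 = TP G" by (simp add: TPk_def)

lemma univ:
  fixes G :: "nat \<Rightarrow> 'a monoid" and K :: "'b monoid"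
  assumes grp: "\<And>n. group (G n)" and K: "group K" and fh: "\<forall>k. f k \<in> hom (TPk G k) K"
    and fc: "\<forall>k. \<forall>Y\<in>carrier (TPk G k). f (Suc k) (phi G k Y) = f k Y"
  shows "\<exists>h. h \<in> hom (archipelago G) K \<and>
            (\<forall>k. \<forall>Y\<in>carrier (TPk G k). h (psi G k Y) = f k Y) \<and>
            (\<forall>h'. h' \<in> hom (archipelago G) K \<and>
                  (\<forall>k. \<forall>Y\<in>carrier (TPk G k). h' (psi G k Y) = f k Y) \<longrightarrow>
                  (\<forall>x\<in>carrier (archipelago G). h' x = h x))"
proof -
  interpret T: group "TP G" by (rule group_TP[OF grp])
  interpret N: normal "normal_closure (TP G) (FP G)" "TP G" by (rule N_normal[OF grp])
  interpret K: group K by (rule K)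
  have gh: "group_hom (TPk G k) K (f k)" for k
    using group_TPk[OF grp] K fh by (simp add: group_hom_def group_hom_axioms_def)
  have f0: "group_hom (TP G) K (f 0)" using gh[of 0] by (simp add: TPk0)
  let ?N = "normal_closure (TP G) (FP G)"
  have iter: "\<forall>l u. is_word (\<lambda>i. G (i + (j + l))) u \<longrightarrow>
      f l (word_class (\<lambda>i. G (i + l)) (shift_word j u)) = f (j + l) (word_class (\<lambda>i. G (i + (j + l))) u)" for j
  proof (induction j)
    case 0
    have "shift_word 0 u = u" for u :: "'a iword" by (simp add: shift_word_def)
    then show ?case by simp
  next
    case (Suc j)
    show ?case
    proof (intro allI impI)
      fix l u assume u: "is_word (\<lambda>i. G (i + (Suc j + l))) u"
      have w: "is_word (\<lambda>i. G (i + l)) (shift_word (Suc j) u)"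
        by (rule is_word_shift[OF _ u]) (simp add: algebra_simps)
      have d: "del_word (shift_word (Suc j) u) = shift_word j u"
        by (simp add: del_word_def shift_word_def)
      have e: "j + Suc l = Suc j + l" by simp
      have "f l (word_class (\<lambda>i. G (i + l)) (shift_word (Suc j) u)) =
            f (Suc l) (phi G l (word_class (\<lambda>i. G (i + l)) (shift_word (Suc j) u)))"
        using fc class_in_TP[OF w] by (simp add: TPk_def)
      also have "\<dots> = f (Suc l) (word_class (\<lambda>i. G (i + Suc l)) (shift_word j u))"
        unfolding phi_class[OF w] d ..
      also have "\<dots> = f (j + Suc l) (word_class (\<lambda>i. G (i + (j + Suc l))) u)"
      proof -
        have IHi: "is_word (\<lambda>i. G (i + (j + Suc l))) u \<longrightarrow> f (Suc l) (word_class (\<lambda>i. G (i + Suc l)) (shift_word j u)) =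
           f (j + Suc l) (word_class (\<lambda>i. G (i + (j + Suc l))) u)" using Suc.IH by blast
        show ?thesis using IHi[unfolded e] u unfolding e by blast
      qed
      finally show "f l (word_class (\<lambda>i. G (i + l)) (shift_word (Suc j) u)) =
          f (Suc j + l) (word_class (\<lambda>i. G (i + (Suc j + l))) u)" unfolding e .
    qed
  qed
  have kill: "\<forall>l u. is_word (\<lambda>i. G (i + l)) u \<and> finite (fst u) \<and> (\<forall>x\<in>fst u. fst (snd u x) < j) \<longrightarrow>
      f l (word_class (\<lambda>i. G (i + l)) u) = \<one>\<^bsub>K\<^esub>" for j
  proof (induction j)
    case 0
    show ?case
    proof (intro allI impI)
      fix l u assume u: "is_word (\<lambda>i. G (i + l)) u \<and> finite (fst u) \<and> (\<forall>x\<in>fst u. fst (snd u x) < 0)"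
      then have "fst u = {}" by auto
      then have "word_class (\<lambda>i. G (i + l)) u = \<one>\<^bsub>TPk G l\<^esub>" by (simp add: one_TPk class_empty_set)
      then show "f l (word_class (\<lambda>i. G (i + l)) u) = \<one>\<^bsub>K\<^esub>" using group_hom.hom_one[OF gh] by simp
    qed
  next
    case (Suc j)
    show ?case
    proof (intro allI impI)
      fix l u assume u: "is_word (\<lambda>i. G (i + l)) u \<and> finite (fst u) \<and> (\<forall>x\<in>fst u. fst (snd u x) < Suc j)"
      have du: "is_word (\<lambda>i. G (i + Suc l)) (del_word u)" using is_word_del_k u by blast
      have "f l (word_class (\<lambda>i. G (i + l)) u) = f (Suc l) (phi G l (word_class (\<lambda>i. G (i + l)) u))"
      proof -
        have "word_class (\<lambda>i. G (i + l)) u \<in> carrier (TPk G l)"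
          unfolding TPk_def using u by (intro class_in_TP) blast
        then show ?thesis using fc by simp
      qed
      also have "\<dots> = f (Suc l) (word_class (\<lambda>i. G (i + Suc l)) (del_word u))"
        using phi_class u by metis
      also have "\<dots> = \<one>\<^bsub>K\<^esub>"
      proof (rule Suc.IH[rule_format, of "Suc l" "del_word u"], intro conjI)
        show "is_word (\<lambda>i. G (i + Suc l)) (del_word u)" by (rule du)
        show "finite (fst (del_word u))" using u by (simp add: del_word_def)
        show "\<forall>x\<in>fst (del_word u). fst (snd (del_word u) x) < j" using u by (auto simp: del_word_def)
      qed
      finally show "f l (word_class (\<lambda>i. G (i + l)) u) = \<one>\<^bsub>K\<^esub>" .
    qed
  qed
  have FPker: "f 0 Y = \<one>\<^bsub>K\<^esub>" if YF: "Y \<in> FP G" for Y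
  proof -
    obtain u where u: "is_word G u" "finite (fst u)" "Y = word_class G u" using YF unfolding FP_def by blast
    obtain j where "\<forall>x\<in>fst u. fst (snd u x) < j"
      using u(2) finite_nat_set_iff_bounded[of "(\<lambda>x. fst (snd u x)) ` fst u"] by auto
    then have "f 0 (word_class (\<lambda>i. G (i + 0)) u) = \<one>\<^bsub>K\<^esub>"
      using kill[of j, rule_format, of 0 u] u by simp
    then show ?thesis using u by simp
  qed
  have ker: "kernel (TP G) K (f 0) \<lhd> TP G" by (rule group_hom.normal_kernel[OF f0])
  have Nker: "?N \<subseteq> kernel (TP G) K (f 0)"
    unfolding normal_closure_def
  proof (rule T.generate_subgroup_incl[OF _ normal_imp_subgroup[OF ker]])
    show "{g \<otimes>\<^bsub>TP G\<^esub> s \<otimes>\<^bsub>TP G\<^esub> inv\<^bsub>TP G\<^esub> g |g s. g \<in> carrier (TP G) \<and> s \<in> FP G} \<subseteq> kernel (TP G) K (f 0)"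
    proof clarify
      fix g s assume gs: "g \<in> carrier (TP G)" "s \<in> FP G"
      then have s: "s \<in> carrier (TP G)" using FP_sub by blast
      show "g \<otimes>\<^bsub>TP G\<^esub> s \<otimes>\<^bsub>TP G\<^esub> inv\<^bsub>TP G\<^esub> g \<in> kernel (TP G) K (f 0)"
        using gs s FPker[OF gs(2)] group_hom.hom_closed[OF f0 gs(1)]
        by (simp add: kernel_def group_hom.hom_mult[OF f0] group_hom.hom_inv[OF f0])
    qed
  qed
  define h where "h C = f 0 (SOME Y. Y \<in> C)" for C
  have hcos: "h (?N #>\<^bsub>TP G\<^esub> Y) = f 0 Y" if Y: "Y \<in> carrier (TP G)" for Y
  proof -
    have "Y \<in> ?N #>\<^bsub>TP G\<^esub> Y" using Y by (simp add: T.rcos_self N.subgroup_axioms)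
    then have "(SOME Z. Z \<in> ?N #>\<^bsub>TP G\<^esub> Y) \<in> ?N #>\<^bsub>TP G\<^esub> Y" by (rule someI)
    then obtain n where n: "n \<in> ?N" "(SOME Z. Z \<in> ?N #>\<^bsub>TP G\<^esub> Y) = n \<otimes>\<^bsub>TP G\<^esub> Y"
      by (auto simp: r_coset_def)
    have nc: "n \<in> carrier (TP G)" using n(1) N.subset by blast
    have "f 0 n = \<one>\<^bsub>K\<^esub>" using Nker n(1) by (auto simp: kernel_def)
    then show ?thesis unfolding h_def n(2) using nc Y
      by (simp add: group_hom.hom_mult[OF f0] group_hom.hom_closed[OF f0])
  qed
  have carA: "carrier (archipelago G) = {?N #>\<^bsub>TP G\<^esub> Y | Y. Y \<in> carrier (TP G)}"
    by (auto simp: archipelago_def FactGroup_def RCOSETS_def)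
  have hhom: "h \<in> hom (archipelago G) K"
  proof (rule homI)
    fix C assume "C \<in> carrier (archipelago G)"
    then obtain Y where Y: "Y \<in> carrier (TP G)" "C = ?N #>\<^bsub>TP G\<^esub> Y" using carA by auto
    show "h C \<in> carrier K" unfolding Y(2) hcos[OF Y(1)] using group_hom.hom_closed[OF f0 Y(1)] .
  next
    fix C D assume "C \<in> carrier (archipelago G)" "D \<in> carrier (archipelago G)"
    then obtain Y Z where Y: "Y \<in> carrier (TP G)" "C = ?N #>\<^bsub>TP G\<^esub> Y"
      and Z: "Z \<in> carrier (TP G)" "D = ?N #>\<^bsub>TP G\<^esub> Z" using carA by auto
    have "C \<otimes>\<^bsub>archipelago G\<^esub> D = ?N #>\<^bsub>TP G\<^esub> (Y \<otimes>\<^bsub>TP G\<^esub> Z)"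
      unfolding Y(2) Z(2) archipelago_def mult_FactGroup by (rule N.rcos_sum[OF Y(1) Z(1)])
    then show "h (C \<otimes>\<^bsub>archipelago G\<^esub> D) = h C \<otimes>\<^bsub>K\<^esub> h D"
      unfolding Y(2) Z(2) using Y(1) Z(1) hcos by (simp add: group_hom.hom_mult[OF f0])
  qed
  have psi0: "psi G 0 Y = ?N #>\<^bsub>TP G\<^esub> Y" if Yc: "Y \<in> carrier (TP G)" for Y
  proof -
    obtain u where u: "is_word G u" "Y = word_class G u" using Yc carrier_TP_E by blast
    have "shift_word 0 u = u" by (simp add: shift_word_def)
    moreover have "psi G 0 (word_class (\<lambda>i. G (i + 0)) u) = ?N #>\<^bsub>TP G\<^esub> word_class G (shift_word 0 u)"
      by (rule psi_class) (simp add: u(1))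
    ultimately show ?thesis using u by simp
  qed
  have hpsi: "\<forall>k. \<forall>Y\<in>carrier (TPk G k). h (psi G k Y) = f k Y"
  proof (intro allI ballI)
    fix k Y assume "Y \<in> carrier (TPk G k)"
    then obtain u where u: "is_word (\<lambda>i. G (i + k)) u" "Y = word_class (\<lambda>i. G (i + k)) u"
      using carrier_TPk_E by metis
    have sw: "is_word G (shift_word k u)" by (rule is_word_shift_k[OF u(1)])
    have "h (psi G k Y) = f 0 (word_class G (shift_word k u))"
      unfolding u(2) psi_class[OF u(1)] by (rule hcos[OF class_in_TP[OF sw]])
    also have "\<dots> = f k (word_class (\<lambda>i. G (i + k)) u)"
      using iter[of k, rule_format, of 0 u] u(1) by simp
    finally show "h (psi G k Y) = f k Y" using u(2) by simp
  qed
  have uniq: "\<forall>h'. h' \<in> hom (archipelago G) K \<and>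
                  (\<forall>k. \<forall>Y\<in>carrier (TPk G k). h' (psi G k Y) = f k Y) \<longrightarrow>
                  (\<forall>x\<in>carrier (archipelago G). h' x = h x)"
  proof (intro allI impI ballI)
    fix h' x assume h': "h' \<in> hom (archipelago G) K \<and> (\<forall>k. \<forall>Y\<in>carrier (TPk G k). h' (psi G k Y) = f k Y)"
      and x: "x \<in> carrier (archipelago G)"
    then obtain Y where Y: "Y \<in> carrier (TP G)" "x = ?N #>\<^bsub>TP G\<^esub> Y" using carA by auto
    have "h' x = h' (psi G 0 Y)" using psi0[OF Y(1)] Y(2) by simp
    also have "\<dots> = f 0 Y" using h' Y(1) by (simp add: TPk0)
    also have "\<dots> = h x" using hcos[OF Y(1)] Y(2) by simp
    finally show "h' x = h x" .
  qed
  show ?thesis using hhom hpsi uniq by blast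
qed


theorem proposition14:
  fixes G :: "nat \<Rightarrow> 'a monoid"
  assumes grp: "\<And>n. group (G n)"
  shows "group (archipelago G) \<and>
    (\<forall>k. group (TPk G k) \<and>
         phi G k \<in> hom (TPk G k) (TPk G (Suc k)) \<and>
         phi G k ` carrier (TPk G k) = carrier (TPk G (Suc k)) \<and>
         kernel (TPk G k) (TPk G (Suc k)) (phi G k) = normal_closure (TPk G k) (factor_image G k)) \<and>
    (\<forall>k. psi G k \<in> hom (TPk G k) (archipelago G) \<and>
         (\<forall>Y\<in>carrier (TPk G k). psi G (Suc k) (phi G k Y) = psi G k Y)) \<and>
    (\<forall>(K :: 'b monoid) f. group K \<and> (\<forall>k. f k \<in> hom (TPk G k) K) \<and>
        (\<forall>k. \<forall>Y\<in>carrier (TPk G k). f (Suc k) (phi G k Y) = f k Y) \<longrightarrow>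
       (\<exists>h. h \<in> hom (archipelago G) K \<and>
            (\<forall>k. \<forall>Y\<in>carrier (TPk G k). h (psi G k Y) = f k Y) \<and>
            (\<forall>h'. h' \<in> hom (archipelago G) K \<and>
                  (\<forall>k. \<forall>Y\<in>carrier (TPk G k). h' (psi G k Y) = f k Y) \<longrightarrow>
                  (\<forall>x\<in>carrier (archipelago G). h' x = h x))))"
  proof -
  interpret N: normal "normal_closure (TP G) (FP G)" "TP G" by (rule N_normal[OF grp])
  have gA: "group (archipelago G)" unfolding archipelago_def by (rule N.factorgroup_is_group)
  show ?thesis
  proof (intro conjI allI impI)
    show "group (archipelago G)" by (rule gA)
  next
    fix k
    show "group (TPk G k)" by (rule group_TPk[OF grp])
    show "phi G k \<in> hom (TPk G k) (TPk G (Suc k))" by (rule phi_hom)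
    show "phi G k ` carrier (TPk G k) = carrier (TPk G (Suc k))" by (rule phi_surj)
    show "kernel (TPk G k) (TPk G (Suc k)) (phi G k) = normal_closure (TPk G k) (factor_image G k)"
      by (rule phi_kernel[OF grp])
  next
    fix k
    show "psi G k \<in> hom (TPk G k) (archipelago G)" by (rule psi_hom[OF grp])
    show "\<forall>Y\<in>carrier (TPk G k). psi G (Suc k) (phi G k Y) = psi G k Y"
      using psi_compat[where G=G, OF grp] by blast
  next
    fix K :: "'b monoid" and f
    assume a: "group K \<and> (\<forall>k. f k \<in> hom (TPk G k) K) \<and>
        (\<forall>k. \<forall>Y\<in>carrier (TPk G k). f (Suc k) (phi G k Y) = f k Y)"
    show "\<exists>h. h \<in> hom (archipelago G) K \<and>
            (\<forall>k. \<forall>Y\<in>carrier (TPk G k). h (psi G k Y) = f k Y) \<and>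
            (\<forall>h'. h' \<in> hom (archipelago G) K \<and>
                  (\<forall>k. \<forall>Y\<in>carrier (TPk G k). h' (psi G k Y) = f k Y) \<longrightarrow>
                  (\<forall>x\<in>carrier (archipelago G). h' x = h x))"
      using univ[where G=G, OF grp] a by blast
  qed
qed

end
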